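(* Let $G$ be a simple undirected graph and let $G'$ be any subgraph of $G$. Then $\rho(M_G(s))\geq \rho(M_{G'}(s))$ for all $s\in(-\infty,0]\cup[1,+\infty)$.
   Context: For a simple undirected graph $G$ on $n$ vertices with adjacency matrix $A$, diagonal degree matrix $D$ and $n\times n$ identity matrix $I$, and a real parameter $s$, the deformed Laplacian matrix of $G$ is $M_G(s)=I-sA+s^2(D-I)$ (for a subgraph $G'$, $M_{G'}(s)$ is formed with the adjacency and degree matrices of $G'$ itself). For a real symmetric matrix $B$, $\rho(B)$ denotes its spectral radius, i.e. its largest eigenvalue $\sup_{|x|=1}\langle x,Bx\rangle$. *)

theory Defs
  imports Main "HOL-Analysis.Analysis"
begin

definition simple_graph :: "'a set \<Rightarrow> ('a \<Rightarrow> 'a \<Rightarrow> bool) \<Rightarrow> bool" where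
  "simple_graph V E \<longleftrightarrow> finite V \<and>
     (\<forall>i j. E i j \<longrightarrow> i \<in> V \<and> j \<in> V \<and> i \<noteq> j) \<and>
     (\<forall>i j. E i j \<longrightarrow> E j i)"

definition subgraph :: "'a set \<Rightarrow> ('a \<Rightarrow> 'a \<Rightarrow> bool) \<Rightarrow> 'a set \<Rightarrow> ('a \<Rightarrow> 'a \<Rightarrow> bool) \<Rightarrow> bool" where
  "subgraph V' E' V E \<longleftrightarrow> simple_graph V' E' \<and> V' \<subseteq> V \<and> (\<forall>i j. E' i j \<longrightarrow> E i j)"

text \<open>Matrices indexed by the vertex set V are functions 'a => 'a => real (only entries on V x V matter).\<close>
definition adj_mat :: "('a \<Rightarrow> 'a \<Rightarrow> bool) \<Rightarrow> 'a \<Rightarrow> 'a \<Rightarrow> real" where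
  "adj_mat E i j = (if E i j then 1 else 0)"

definition degree :: "'a set \<Rightarrow> ('a \<Rightarrow> 'a \<Rightarrow> bool) \<Rightarrow> 'a \<Rightarrow> nat" where
  "degree V E i = card {j \<in> V. E i j}"

definition deg_mat :: "'a set \<Rightarrow> ('a \<Rightarrow> 'a \<Rightarrow> bool) \<Rightarrow> 'a \<Rightarrow> 'a \<Rightarrow> real" where
  "deg_mat V E i j = (if i = j then real (degree V E i) else 0)"

definition id_mat :: "'a \<Rightarrow> 'a \<Rightarrow> real" where
  "id_mat i j = (if i = j then 1 else 0)"

definition deformed_laplacian :: "'a set \<Rightarrow> ('a \<Rightarrow> 'a \<Rightarrow> bool) \<Rightarrow> real \<Rightarrow> 'a \<Rightarrow> 'a \<Rightarrow> real" where
  "deformed_laplacian V E s i j =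
     id_mat i j - s * adj_mat E i j + s\<^sup>2 * (deg_mat V E i j - id_mat i j)"

text \<open>rho(B) for a real symmetric matrix indexed by V: its largest eigenvalue,
  sup over unit vectors x (supported on V) of <x, Bx>.\<close>
definition rho :: "'a set \<Rightarrow> ('a \<Rightarrow> 'a \<Rightarrow> real) \<Rightarrow> real" where
  "rho V B = Sup {(\<Sum>i\<in>V. \<Sum>j\<in>V. x i * B i j * x j) | x :: 'a \<Rightarrow> real.
                    (\<Sum>i\<in>V. (x i)\<^sup>2) = 1}"

end

theory Submission
  imports Defs
begin

definition gq :: "real \<Rightarrow> real \<Rightarrow> real \<Rightarrow> real" where
  "gq s a b = s\<^sup>2 * (a\<^sup>2 + b\<^sup>2) / 2 - s * a * b"

lemma gq_nonneg:
  assumes "(s \<le> 0 \<and> a * b \<ge> 0) \<or> s \<ge> 1"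
  shows "gq s a b \<ge> 0"
proof -
  have h1: "a\<^sup>2 + b\<^sup>2 \<ge> 2 * a * b" using sum_squares_ge_zero
    by (smt (verit) power2_diff zero_le_power2)
  have h2: "a\<^sup>2 + b\<^sup>2 \<ge> 0" by simp
  show ?thesis
  proof (cases "s \<le> 0 \<and> a * b \<ge> 0")
    case True
    then have "- s * a * b \<ge> 0" by (simp add: mult_nonpos_nonneg mult.assoc)
    moreover have "s\<^sup>2 * (a\<^sup>2 + b\<^sup>2) / 2 \<ge> 0" by simp
    ultimately show ?thesis unfolding gq_def by linarith
  next
    case False
    then have s: "s \<ge> 1" using assms by auto
    have "s\<^sup>2 * (a\<^sup>2 + b\<^sup>2) \<ge> s * (a\<^sup>2 + b\<^sup>2)"
      using s h2 by (intro mult_right_mono) (auto simp: power2_eq_square)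
    moreover have "s * (a\<^sup>2 + b\<^sup>2) \<ge> s * (2 * a * b)"
      using s h1 by (intro mult_left_mono) auto
    ultimately show ?thesis unfolding gq_def by (simp add: algebra_simps)
  qed
qed

lemma gq_abs:
  assumes "s \<le> 0"
  shows "gq s \<bar>a\<bar> \<bar>b\<bar> \<ge> gq s a b"
proof -
  have "\<bar>a\<bar> * \<bar>b\<bar> \<ge> a * b" by (simp add: abs_mult[symmetric])
  then have "- s * (\<bar>a\<bar> * \<bar>b\<bar>) \<ge> - s * (a * b)" using assms
    by (intro mult_left_mono) auto
  moreover have "gq s \<bar>a\<bar> \<bar>b\<bar> = s\<^sup>2*(a\<^sup>2+b\<^sup>2)/2 - s*(\<bar>a\<bar>*\<bar>b\<bar>)" by (simp add: gq_def power2_abs)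
  moreover have "gq s a b = s\<^sup>2*(a\<^sup>2+b\<^sup>2)/2 - s*(a*b)" by (simp add: gq_def)
  ultimately show ?thesis by linarith
qed

lemma quad_form:
  assumes fin: "finite W" and sym: "\<And>i j. F i j \<Longrightarrow> F j i"
  shows "(\<Sum>i\<in>W. \<Sum>j\<in>W. x i * deformed_laplacian W F s i j * x j)
     = (1 - s\<^sup>2) * (\<Sum>i\<in>W. (x i)\<^sup>2)
       + (\<Sum>i\<in>W. \<Sum>j\<in>W. if F i j then gq s (x i) (x j) else 0)"
proof -
  have deg: "real (degree W F i) = (\<Sum>j\<in>W. if F i j then 1 else 0)" for i
  proof -
    have "real (degree W F i) = (\<Sum>j\<in>{j\<in>W. F i j}. 1)" by (simp add: degree_def)
    also have "\<dots> = (\<Sum>j\<in>W. if F i j then 1 else 0)"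
      using sum.inter_filter[OF fin, of "\<lambda>_. 1::real" "F i"] by simp
    finally show ?thesis .
  qed
  have idsum: "(\<Sum>j\<in>W. x i * id_mat i j * x j) = (if i \<in> W then (x i)\<^sup>2 else 0)" for i
  proof -
    have "(\<Sum>j\<in>W. x i * id_mat i j * x j) = (\<Sum>j\<in>W. if i = j then (x i)\<^sup>2 else 0)"
      by (intro sum.cong refl) (simp add: id_mat_def power2_eq_square)
    then show ?thesis using fin by (simp add: sum.delta)
  qed
  have degsum: "(\<Sum>j\<in>W. x i * deg_mat W F i j * x j) = (if i \<in> W then real (degree W F i) * (x i)\<^sup>2 else 0)" for i
  proof -
    have "(\<Sum>j\<in>W. x i * deg_mat W F i j * x j) = (\<Sum>j\<in>W. if i = j then real (degree W F i) * (x i)\<^sup>2 else 0)"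
      by (intro sum.cong refl) (simp add: deg_mat_def power2_eq_square)
    then show ?thesis using fin by (simp add: sum.delta)
  qed
  have swap: "(\<Sum>i\<in>W. \<Sum>j\<in>W. if F i j then (x j)\<^sup>2 else 0) = (\<Sum>i\<in>W. \<Sum>j\<in>W. if F i j then (x i)\<^sup>2 else 0)"
  proof -
    have "(\<Sum>i\<in>W. \<Sum>j\<in>W. if F i j then (x j)\<^sup>2 else 0) = (\<Sum>j\<in>W. \<Sum>i\<in>W. if F i j then (x j)\<^sup>2 else 0)"
      by (rule sum.swap)
    also have "\<dots> = (\<Sum>j\<in>W. \<Sum>i\<in>W. if F j i then (x j)\<^sup>2 else 0)"
      using sym by (intro sum.cong refl) (metis)
    finally show ?thesis .
  qed
  have degsum2: "(\<Sum>i\<in>W. real (degree W F i) * (x i)\<^sup>2) = (\<Sum>i\<in>W. \<Sum>j\<in>W. if F i j then (x i)\<^sup>2 else 0)"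
    unfolding deg sum_distrib_right by (intro sum.cong refl) simp
  have "(\<Sum>i\<in>W. \<Sum>j\<in>W. x i * deformed_laplacian W F s i j * x j)
     = (\<Sum>i\<in>W. (1 - s\<^sup>2) * (\<Sum>j\<in>W. x i * id_mat i j * x j) + s\<^sup>2 * (\<Sum>j\<in>W. x i * deg_mat W F i j * x j)
          - s * (\<Sum>j\<in>W. x i * adj_mat F i j * x j))"
    by (simp add: deformed_laplacian_def algebra_simps sum.distrib sum_subtractf sum_distrib_left)
  also have "\<dots> = (1 - s\<^sup>2) * (\<Sum>i\<in>W. (x i)\<^sup>2) + s\<^sup>2 * (\<Sum>i\<in>W. real (degree W F i) * (x i)\<^sup>2)
          - s * (\<Sum>i\<in>W. \<Sum>j\<in>W. x i * adj_mat F i j * x j)"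
    by (simp add: idsum degsum sum.distrib sum_subtractf sum_distrib_left)
  also have "\<dots> = (1 - s\<^sup>2) * (\<Sum>i\<in>W. (x i)\<^sup>2)
       + (\<Sum>i\<in>W. \<Sum>j\<in>W. if F i j then gq s (x i) (x j) else 0)"
  proof -
    have "(\<Sum>i\<in>W. \<Sum>j\<in>W. if F i j then gq s (x i) (x j) else 0)
      = s\<^sup>2 / 2 * ((\<Sum>i\<in>W. \<Sum>j\<in>W. if F i j then (x i)\<^sup>2 else 0) + (\<Sum>i\<in>W. \<Sum>j\<in>W. if F i j then (x j)\<^sup>2 else 0))
        - s * (\<Sum>i\<in>W. \<Sum>j\<in>W. x i * adj_mat F i j * x j)"
    proof -
      have pt: "(if F i j then gq s (x i) (x j) else 0) = s\<^sup>2 / 2 * (if F i j then (x i)\<^sup>2 else 0)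
         + s\<^sup>2 / 2 * (if F i j then (x j)\<^sup>2 else 0) - s * (x i * adj_mat F i j * x j)" for i j
        by (simp add: gq_def adj_mat_def algebra_simps)
      show ?thesis unfolding pt sum.distrib sum_subtractf sum_distrib_left[symmetric] by (simp add: algebra_simps)
    qed
    then show ?thesis using swap degsum2 by simp
  qed
  finally show ?thesis .
qed


lemma unit_le1:
  assumes "finite W" "(\<Sum>i\<in>W. (x i)\<^sup>2) = (1::real)" "i \<in> W"
  shows "\<bar>x i\<bar> \<le> 1"
proof -
  have "(x i)\<^sup>2 \<le> (\<Sum>i\<in>W. (x i)\<^sup>2)"
    using assms by (intro member_le_sum) auto
  then have "(x i)\<^sup>2 \<le> 1\<^sup>2" using assms by simp
  then have "\<bar>x i\<bar> \<le> \<bar>1\<bar>" by (simp only: abs_le_square_iff)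
  then show ?thesis by simp
qed

lemma rho_bdd:
  assumes "finite W"
  shows "bdd_above {(\<Sum>i\<in>W. \<Sum>j\<in>W. x i * B i j * x j) | x :: 'a \<Rightarrow> real.
                    (\<Sum>i\<in>W. (x i)\<^sup>2) = 1}"
proof (rule bdd_aboveI)
  fix q assume "q \<in> {(\<Sum>i\<in>W. \<Sum>j\<in>W. x i * B i j * x j) | x :: 'a \<Rightarrow> real.
                    (\<Sum>i\<in>W. (x i)\<^sup>2) = 1}"
  then obtain x where q: "q = (\<Sum>i\<in>W. \<Sum>j\<in>W. x i * B i j * x j)" and u: "(\<Sum>i\<in>W. (x i)\<^sup>2) = 1"
    by blast
  have "(\<Sum>i\<in>W. \<Sum>j\<in>W. x i * B i j * x j) \<le> (\<Sum>i\<in>W. \<Sum>j\<in>W. \<bar>B i j\<bar>)"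
  proof (intro sum_mono)
    fix i j assume ij: "i \<in> W" "j \<in> W"
    have "\<bar>x i\<bar> \<le> 1" "\<bar>x j\<bar> \<le> 1" using unit_le1[OF assms u] ij by auto
    then have "\<bar>x i\<bar> * \<bar>B i j\<bar> * \<bar>x j\<bar> \<le> 1 * \<bar>B i j\<bar> * 1"
      by (intro mult_mono) auto
    moreover have "x i * B i j * x j \<le> \<bar>x i * B i j * x j\<bar>" by (rule abs_ge_self)
    moreover have "\<bar>x i * B i j * x j\<bar> = \<bar>x i\<bar> * \<bar>B i j\<bar> * \<bar>x j\<bar>" by (simp add: abs_mult)
    ultimately show "x i * B i j * x j \<le> \<bar>B i j\<bar>" by linarith
  qed
  then show "q \<le> (\<Sum>i\<in>W. \<Sum>j\<in>W. \<bar>B i j\<bar>)" using q by simp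
qed

theorem corollary3p5:
  fixes V V' :: "'a set" and E E' :: "'a \<Rightarrow> 'a \<Rightarrow> bool" and s :: real
  assumes "simple_graph V E"
    and "subgraph V' E' V E"
    and "V' \<noteq> {}"
    and "s \<le> 0 \<or> s \<ge> 1"
  shows "rho V (deformed_laplacian V E s) \<ge> rho V' (deformed_laplacian V' E' s)"
proof -
  have sg: "finite V \<and> (\<forall>i j. E i j \<longrightarrow> i \<in> V \<and> j \<in> V \<and> i \<noteq> j) \<and> (\<forall>i j. E i j \<longrightarrow> E j i)"
    using assms(1) unfolding simple_graph_def .
  have finV: "finite V" using sg by (rule conjunct1)
  have symE: "E i j \<Longrightarrow> E j i" for i j using sg[THEN conjunct2, THEN conjunct2] by (elim allE impE)
  have sg': "simple_graph V' E' \<and> V' \<subseteq> V \<and> (\<forall>i j. E' i j \<longrightarrow> E i j)"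
    using assms(2) unfolding subgraph_def .
  have sg2: "finite V' \<and> (\<forall>i j. E' i j \<longrightarrow> i \<in> V' \<and> j \<in> V' \<and> i \<noteq> j) \<and> (\<forall>i j. E' i j \<longrightarrow> E' j i)"
    using sg'[THEN conjunct1] unfolding simple_graph_def .
  have finV': "finite V'" using sg2 by (rule conjunct1)
  have symE': "E' i j \<Longrightarrow> E' j i" for i j using sg2[THEN conjunct2, THEN conjunct2] by (elim allE impE)
  have sub: "V' \<subseteq> V" using sg' by (elim conjE)
  have EE: "E' i j \<Longrightarrow> E i j" for i j using sg'[THEN conjunct2, THEN conjunct2] by (elim allE impE)
  define SV where "SV = {(\<Sum>i\<in>V. \<Sum>j\<in>V. x i * deformed_laplacian V E s i j * x j) | x :: 'a \<Rightarrow> real.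
                    (\<Sum>i\<in>V. (x i)\<^sup>2) = 1}"
  define SV' where "SV' = {(\<Sum>i\<in>V'. \<Sum>j\<in>V'. x i * deformed_laplacian V' E' s i j * x j) | x :: 'a \<Rightarrow> real.
                    (\<Sum>i\<in>V'. (x i)\<^sup>2) = 1}"
  have bdd: "bdd_above SV" unfolding SV_def by (rule rho_bdd[OF finV])
  obtain v where v: "v \<in> V'" using assms(3) by auto
  have "(\<Sum>i\<in>V'. (if i = v then (1::real) else 0)\<^sup>2) = 1"
  proof -
    have "(\<Sum>i\<in>V'. (if i = v then (1::real) else 0)\<^sup>2) = (\<Sum>i\<in>V'. if i = v then 1 else 0)"
      by (intro sum.cong refl) auto
    then show ?thesis using finV' v by simp
  qed
  then have "(\<Sum>i\<in>V'. \<Sum>j\<in>V'. (if i = v then (1::real) else 0) * deformed_laplacian V' E' s i j * (if j = v then (1::real) else 0)) \<in> SV'"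
    unfolding SV'_def by (intro CollectI exI[of _ "\<lambda>i. if i = v then (1::real) else 0"] conjI refl)
  then have ne: "SV' \<noteq> {}" by (rule ex_in_conv[THEN iffD1, OF exI, simplified ex_in_conv])
  have key: "q \<le> Sup SV" if "q \<in> SV'" for q
  proof -
    obtain x where q: "q = (\<Sum>i\<in>V'. \<Sum>j\<in>V'. x i * deformed_laplacian V' E' s i j * x j)"
      and u: "(\<Sum>i\<in>V'. (x i)\<^sup>2) = 1"
    proof -
      have "\<exists>x. q = (\<Sum>i\<in>V'. \<Sum>j\<in>V'. x i * deformed_laplacian V' E' s i j * x j) \<and> (\<Sum>i\<in>V'. (x i)\<^sup>2) = 1"
        using \<open>q \<in> SV'\<close> unfolding SV'_def by (simp only: mem_Collect_eq)
      then show ?thesis using that by (elim exE conjE)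
    qed
    define y where "y i = (if i \<in> V' then (if s \<le> 0 then \<bar>x i\<bar> else x i) else 0)" for i
    have ysq: "(\<Sum>i\<in>V. (y i)\<^sup>2) = (\<Sum>i\<in>V'. (y i)\<^sup>2)"
      using sub finV by (intro sum.mono_neutral_right) (auto simp: y_def)
    also have "\<dots> = (\<Sum>i\<in>V'. (x i)\<^sup>2)"
      by (intro sum.cong refl) (auto simp: y_def power2_abs)
    finally have uy: "(\<Sum>i\<in>V. (y i)\<^sup>2) = 1" using u by simp
    define h :: "('a \<Rightarrow> 'a \<Rightarrow> bool) \<Rightarrow> ('a \<Rightarrow> real) \<Rightarrow> 'a \<Rightarrow> 'a \<Rightarrow> real"
      where "h F z i j = (if F i j then gq s (z i) (z j) else 0)" for F z i j
    have gy: "gq s (y i) (y j) \<ge> 0" for i j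
      using assms(4) by (intro gq_nonneg) (auto simp: y_def)
    have "(\<Sum>i\<in>V'. \<Sum>j\<in>V'. h E' x i j) \<le> (\<Sum>i\<in>V'. \<Sum>j\<in>V'. h E' y i j)"
    proof (intro sum_mono)
      fix i j assume "i \<in> V'" "j \<in> V'"
      then show "h E' x i j \<le> h E' y i j"
        using gq_abs[of s "x i" "x j"] by (auto simp: h_def y_def)
    qed
    also have "\<dots> \<le> (\<Sum>i\<in>V'. \<Sum>j\<in>V'. h E y i j)"
      by (intro sum_mono) (auto simp: h_def gy EE)
    also have "\<dots> \<le> (\<Sum>i\<in>V'. \<Sum>j\<in>V. h E y i j)"
      by (intro sum_mono sum_mono2 finV sub) (auto simp: h_def gy)
    also have "\<dots> \<le> (\<Sum>i\<in>V. \<Sum>j\<in>V. h E y i j)"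
      by (intro sum_mono2 finV sub sum_nonneg) (auto simp: h_def gy)
    finally have hle: "(\<Sum>i\<in>V'. \<Sum>j\<in>V'. h E' x i j) \<le> (\<Sum>i\<in>V. \<Sum>j\<in>V. h E y i j)" .
    have "q = (1 - s\<^sup>2) * 1 + (\<Sum>i\<in>V'. \<Sum>j\<in>V'. h E' x i j)"
      unfolding q h_def using quad_form[OF finV' symE', where x=x and s=s] u by simp
    also have "\<dots> \<le> (1 - s\<^sup>2) * 1 + (\<Sum>i\<in>V. \<Sum>j\<in>V. h E y i j)" using hle by simp
    also have "\<dots> = (\<Sum>i\<in>V. \<Sum>j\<in>V. y i * deformed_laplacian V E s i j * y j)"
      unfolding h_def using quad_form[OF finV symE, where x=y and s=s] uy by simp
    also have "\<dots> \<le> Sup SV"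
    proof (rule cSup_upper[OF _ bdd])
      show "(\<Sum>i\<in>V. \<Sum>j\<in>V. y i * deformed_laplacian V E s i j * y j) \<in> SV"
        unfolding SV_def using uy by (intro CollectI exI[of _ y] conjI refl)
    qed
    finally show ?thesis .
  qed
  have "Sup SV' \<le> Sup SV" using ne key by (rule cSup_least)
  then show ?thesis unfolding rho_def SV_def SV'_def .
qed

end
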